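(* Let $W$ be a binary-input channel and define recursively $L_0=R_0=W$, $L_{n+1}=(L_n,R_n)^-$, $R_{n+1}=(L_n,R_n)^+$ for $n\ge 0$. Then for all $n\ge0$, $I(L_n)+I(R_n)=2I(W)$ and $I(L_{n+1})\le I(L_n)\le I(R_n)\le I(R_{n+1})$.
   Context: A binary-input channel $W\colon\{0,1\}\to\mathcal{Y}$ is a family of transition probabilities $W(y\mid x)$ on a discrete output alphabet. Its symmetric capacity $I(W)$ is the mutual information (in bits) between a uniformly distributed input in $\{0,1\}$ and the output. For binary-input channels $W\colon\{0,1\}\to\mathcal{Y}$, $V\colon\{0,1\}\to\mathcal{Z}$ define $(W,V)^-(y,z\mid x)=\sum_{u\in\{0,1\}}\tfrac12 W(y\mid u+x)V(z\mid u)$ and $(W,V)^+(y,z,u\mid x)=\tfrac12 W(y\mid u+x)V(z\mid x)$, addition modulo 2. *)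

theory Defs
  imports "HOL-Analysis.Analysis"
begin

text \<open>Binary inputs {0,1} are represented by bool (0 = False, 1 = True);
  addition modulo 2 is exclusive or, u + x = (u \<noteq> x).
  A binary-input channel with output alphabet 'y is a transition kernel
  W x y = W(y | x).\<close>

type_synonym 'y chan = "bool \<Rightarrow> 'y \<Rightarrow> real"

definition is_channel :: "'y chan \<Rightarrow> bool" where
  "is_channel W \<longleftrightarrow> (\<forall>x y. 0 \<le> W x y) \<and> (\<forall>x. (W x has_sum 1) UNIV)"

text \<open>Symmetric capacity: mutual information (bits) between a uniform input and the
  output, I(W) = sum_y sum_x 1/2 W(y|x) log2 (W(y|x) / q(y)), q(y) = (W(y|0)+W(y|1))/2,
  with the convention 0 log 0 = 0.\<close>

definition sym_cap :: "'y chan \<Rightarrow> real" where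
  "sym_cap W = (\<Sum>\<^sub>\<infinity> y. \<Sum>x\<in>UNIV.
     (if W x y = 0 then 0
      else 1/2 * W x y * log 2 (W x y / ((W False y + W True y) / 2))))"

definition chan_minus :: "'a chan \<Rightarrow> 'b chan \<Rightarrow> ('a \<times> 'b) chan" where
  "chan_minus W V x = (\<lambda>(y, z). \<Sum>u\<in>UNIV. 1/2 * W (u \<noteq> x) y * V u z)"

definition chan_plus :: "'a chan \<Rightarrow> 'b chan \<Rightarrow> ('a \<times> 'b \<times> bool) chan" where
  "chan_plus W V x = (\<lambda>(y, z, u). 1/2 * W (u \<noteq> x) y * V x z)"

definition chan_map :: "('a \<Rightarrow> 'b) \<Rightarrow> 'a chan \<Rightarrow> 'b chan" where
  "chan_map f W x z = (if z \<in> range f then W x (inv f z) else 0)"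

text \<open>Common output alphabet for all the channels L_n, R_n: trees over 'y.
  The outputs of (L_n,R_n)^- are pairs (Pair2), those of (L_n,R_n)^+ triples (Pair3).\<close>
datatype 'y otree = Base 'y | Pair2 "'y otree" "'y otree" | Pair3 "'y otree" "'y otree" bool

fun LR :: "'y chan \<Rightarrow> nat \<Rightarrow> 'y otree chan \<times> 'y otree chan" where
  "LR W 0 = (chan_map Base W, chan_map Base W)"
| "LR W (Suc n) =
     (let (L, R) = LR W n in
       (chan_map (\<lambda>(a, b). Pair2 a b) (chan_minus L R),
        chan_map (\<lambda>(a, b, u). Pair3 a b u) (chan_plus L R)))"

definition Lch :: "'y chan \<Rightarrow> nat \<Rightarrow> 'y otree chan" where
  "Lch W n = fst (LR W n)"

definition Rch :: "'y chan \<Rightarrow> nat \<Rightarrow> 'y otree chan" where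
  "Rch W n = snd (LR W n)"

end

theory Submission
  imports Defs
begin


definition phi :: "real \<Rightarrow> real" where "phi t = t * log 2 t"
definition gg :: "real \<Rightarrow> real \<Rightarrow> real" where
  "gg a b = 1/2 * phi a + 1/2 * phi b - phi ((a+b)/2)"
definition kk :: "real \<Rightarrow> real \<Rightarrow> real" where
  "kk w q = (if w = 0 then 0 else w * log 2 (w/q))"

lemma phi_mult: assumes "0 \<le> x" "0 \<le> y" shows "phi (x*y) = x * phi y + y * phi x"
proof (cases "x = 0 \<or> y = 0")
  case True then show ?thesis by (auto simp: phi_def)
next
  case False
  then have "x > 0" "y > 0" using assms by auto
  then show ?thesis by (simp add: phi_def log_mult algebra_simps)
qed

lemma phi_half: "phi (1/2) = -1/2"
  by (simp add: phi_def log_divide)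

lemma kk_phi: assumes "0 \<le> w" "w > 0 \<Longrightarrow> q > 0"
  shows "kk w q = phi w - w * log 2 q"
  using assms by (auto simp: kk_def phi_def log_divide algebra_simps)

lemma gg_kk: assumes "0 \<le> a" "0 \<le> b"
  shows "gg a b = 1/2 * kk a ((a+b)/2) + 1/2 * kk b ((a+b)/2)"
proof -
  have "kk a ((a+b)/2) = phi a - a * log 2 ((a+b)/2)" using assms by (intro kk_phi) auto
  moreover have "kk b ((a+b)/2) = phi b - b * log 2 ((a+b)/2)" using assms by (intro kk_phi) auto
  moreover have "phi ((a+b)/2) = 1/2*(a * log 2 ((a+b)/2)) + 1/2*(b * log 2 ((a+b)/2))"
    by (simp add: phi_def algebra_simps)
  ultimately show ?thesis unfolding gg_def by linarith
qed

lemma gg_orig: assumes "0 \<le> a" "0 \<le> b"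
  shows "(\<Sum>x\<in>UNIV. (if (if x then b else a) = 0 then 0
      else 1/2 * (if x then b else a) * log 2 ((if x then b else a) / ((a + b) / 2)))) = gg a b"
  using assms by (simp add: UNIV_bool gg_kk kk_def)

lemma logsum:
  assumes "0 \<le> a1" "0 \<le> a2" "0 \<le> s1" "0 \<le> s2" "a1 > 0 \<Longrightarrow> s1 > 0" "a2 > 0 \<Longrightarrow> s2 > 0"
  shows "kk (a1+a2) (s1+s2) \<le> kk a1 s1 + kk a2 s2"
proof -
  consider "a1 = 0" "a2 = 0" | "a1 = 0" "a2 > 0" | "a1 > 0" "a2 = 0" | "a1 > 0" "a2 > 0"
    using assms by linarith
  then show ?thesis
  proof cases
    case 1 then show ?thesis by (simp add: kk_def)
  next
    case 2
    then have "s2 > 0" using assms by auto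
    have "log 2 (a2/(s1+s2)) \<le> log 2 (a2/s2)"
      using 2 \<open>s2 > 0\<close> assms by (intro log_le_cancel_iff[THEN iffD2]) (auto simp: frac_le)
    then show ?thesis using 2 by (simp add: kk_def)
  next
    case 3
    then have "s1 > 0" using assms by auto
    have "log 2 (a1/(s1+s2)) \<le> log 2 (a1/s1)"
      using 3 \<open>s1 > 0\<close> assms by (intro log_le_cancel_iff[THEN iffD2]) (auto simp: frac_le)
    then show ?thesis using 3 by (simp add: kk_def)
  next
    case 4
    then have s: "s1 > 0" "s2 > 0" using assms by auto
    define A S where "A = a1 + a2" and "S = s1 + s2"
    have AS: "A > 0" "S > 0" using 4 s by (auto simp: A_def S_def)
    have key: "a * ln (a/s) - a * ln (A/S) \<ge> a - s * A / S" if "a > 0" "s > 0" for a s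
    proof -
      have "ln (s*A/(a*S)) \<le> s*A/(a*S) - 1" using that AS by (intro ln_le_minus_one) auto
      moreover have "ln (s*A/(a*S)) = ln (A/S) - ln (a/s)"
        using that AS by (simp add: ln_div ln_mult)
      ultimately have "ln (a/s) - ln (A/S) \<ge> 1 - s*A/(a*S)" by linarith
      then have "a * (ln (a/s) - ln (A/S)) \<ge> a * (1 - s*A/(a*S))"
        using that by (intro mult_left_mono) auto
      moreover have "a*(ln(a/s)-ln(A/S)) = a*ln(a/s) - a*ln(A/S)" by (simp add: algebra_simps)
      moreover have "a*(1 - s*A/(a*S)) = a - s*A/S" using that AS by (simp add: field_simps)
      ultimately show ?thesis by linarith
    qed
    have "a1 * ln (a1/s1) - a1 * ln (A/S) + (a2 * ln (a2/s2) - a2 * ln (A/S)) \<ge> (a1 - s1*A/S) + (a2 - s2*A/S)"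
      using key[of a1 s1] key[of a2 s2] 4 s by linarith
    moreover have "(a1 - s1*A/S) + (a2 - s2*A/S) = 0" using AS by (simp add: A_def S_def field_simps)
    moreover have "A*ln(A/S) = a1*ln(A/S) + a2*ln(A/S)" by (simp add: A_def distrib_right)
    ultimately have "A * ln (A/S) \<le> a1 * ln (a1/s1) + a2 * ln (a2/s2)"
      by linarith
    then have "A * ln (A/S) / ln 2 \<le> (a1 * ln (a1/s1) + a2 * ln (a2/s2)) / ln 2"
      by (intro divide_right_mono) auto
    then show ?thesis using 4 AS by (simp add: kk_def log_def A_def S_def add_divide_distrib)
  qed
qed

lemma gg_subadd:
  assumes "0 \<le> a1" "0 \<le> a2" "0 \<le> b1" "0 \<le> b2"
  shows "gg (a1+a2) (b1+b2) \<le> gg a1 b1 + gg a2 b2"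
proof -
  have e: "(a1+a2+(b1+b2))/2 = (a1+b1)/2 + (a2+b2)/2" by (simp add: field_simps)
  have L1: "kk (a1+a2) ((a1+b1)/2 + (a2+b2)/2) \<le> kk a1 ((a1+b1)/2) + kk a2 ((a2+b2)/2)"
    using assms by (intro logsum) auto
  have L2: "kk (b1+b2) ((a1+b1)/2 + (a2+b2)/2) \<le> kk b1 ((a1+b1)/2) + kk b2 ((a2+b2)/2)"
    using assms by (intro logsum) auto
  have "kk (a1+a2) ((a1+a2+(b1+b2))/2) \<le> kk a1 ((a1+b1)/2) + kk a2 ((a2+b2)/2)"
    unfolding e by (rule L1)
  moreover have "kk (b1+b2) ((a1+a2+(b1+b2))/2) \<le> kk b1 ((a1+b1)/2) + kk b2 ((a2+b2)/2)"
    unfolding e by (rule L2)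
  moreover have "gg (a1+a2) (b1+b2) = 1/2*kk (a1+a2) ((a1+a2+(b1+b2))/2) + 1/2*kk (b1+b2) ((a1+a2+(b1+b2))/2)"
    by (rule gg_kk) (use assms in auto)
  moreover have "gg a1 b1 = 1/2*kk a1 ((a1+b1)/2) + 1/2*kk b1 ((a1+b1)/2)"
    by (rule gg_kk) (use assms in auto)
  moreover have "gg a2 b2 = 1/2*kk a2 ((a2+b2)/2) + 1/2*kk b2 ((a2+b2)/2)"
    by (rule gg_kk) (use assms in auto)
  ultimately show ?thesis by linarith
qed

lemma gg_homog: assumes "0 \<le> c" "0 \<le> a" "0 \<le> b" shows "gg (c*a) (c*b) = c * gg a b"
proof -
  have e: "(c*a+c*b)/2 = c * ((a+b)/2)" by (simp add: algebra_simps)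
  have q: "phi ((c*a+c*b)/2) = c * phi ((a+b)/2) + ((a+b)/2) * phi c"
    by (subst e) (rule phi_mult, use assms in auto)
  have pa: "phi (c*a) = c * phi a + a * phi c" by (rule phi_mult) (use assms in auto)
  have pb: "phi (c*b) = c * phi b + b * phi c" by (rule phi_mult) (use assms in auto)
  show ?thesis unfolding gg_def q pa pb by (simp add: algebra_simps)
qed

lemma gg_sym: "gg a b = gg b a" by (simp add: gg_def add.commute)

lemma gg_nonneg: assumes "0 \<le> a" "0 \<le> b" shows "0 \<le> gg a b"
proof -
  have "gg (a+b) (b+a) \<le> gg a b + gg b a" using assms gg_subadd by auto
  moreover have e: "(a+b+(b+a))/2 = a+b" by simp
  have "gg (a+b) (b+a) = 0" unfolding gg_def e by (simp add: add.commute[of b a])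
  ultimately show ?thesis by (simp add: gg_sym)
qed

lemma kk_le: assumes "0 \<le> a" "0 \<le> b" shows "kk a ((a+b)/2) \<le> a"
proof (cases "a = 0")
  case False
  then have "a > 0" using assms by auto
  have "log 2 (a / ((a+b)/2)) \<le> log 2 2"
    using \<open>a>0\<close> assms by (intro log_le_cancel_iff[THEN iffD2]) (auto simp: field_simps)
  then have "a * log 2 (a / ((a+b)/2)) \<le> a * 1" using \<open>a>0\<close> by (intro mult_left_mono) auto
  then show ?thesis using False by (simp add: kk_def)
qed (simp add: kk_def)

lemma gg_le: assumes "0 \<le> a" "0 \<le> b" shows "gg a b \<le> (a+b)/2"
  using kk_le[OF assms] kk_le[of b a] assms by (simp add: gg_kk add.commute)

lemma gg_minus_le:
  assumes "0 \<le> w0" "0 \<le> w1" "0 \<le> p0" "0 \<le> p1"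
  shows "gg (1/2*w0*p0 + 1/2*w1*p1) (1/2*w1*p0 + 1/2*w0*p1) \<le> gg w0 w1 * ((p0+p1)/2)"
proof -
  have "gg ((p0/2)*w0 + (p1/2)*w1) ((p0/2)*w1 + (p1/2)*w0) \<le> gg ((p0/2)*w0) ((p0/2)*w1) + gg ((p1/2)*w1) ((p1/2)*w0)"
    using assms by (intro gg_subadd) auto
  also have "\<dots> = (p0/2) * gg w0 w1 + (p1/2) * gg w1 w0" using assms by (simp only: gg_homog divide_nonneg_pos zero_less_numeral)
  also have "\<dots> = gg w0 w1 * ((p0+p1)/2)" by (simp add: gg_sym[of w1 w0] algebra_simps)
  finally show ?thesis by (simp add: algebra_simps)
qed

lemma gg_chain:
  assumes "0 \<le> w0" "0 \<le> w1" "0 \<le> p0" "0 \<le> p1"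
  shows "gg (1/2*w0*p0 + 1/2*w1*p1) (1/2*w1*p0 + 1/2*w0*p1)
       + (gg (1/2*w0*p0) (1/2*w1*p1) + gg (1/2*w1*p0) (1/2*w0*p1))
       = gg w0 w1 * ((p0+p1)/2) + gg p0 p1 * ((w0+w1)/2)"
proof -
  have h: "phi (1/2*x) = 1/2 * phi x - x/2" if "0 \<le> x" for x
    using phi_mult[of "1/2" x] that by (simp add: phi_half)
  have p: "phi (x*y) = x * phi y + y * phi x" if "0 \<le> x" "0 \<le> y" for x y using phi_mult that by auto
  have F1: "phi ((1/2*w0*p0 + 1/2*w1*p1 + (1/2*w1*p0 + 1/2*w0*p1))/2) = ((w0+w1)/2) * phi ((p0+p1)/2) + ((p0+p1)/2) * phi ((w0+w1)/2)"
  proof -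
    have "(1/2*w0*p0 + 1/2*w1*p1 + (1/2*w1*p0 + 1/2*w0*p1))/2 = ((w0+w1)/2) * ((p0+p1)/2)"
      by (simp add: algebra_simps)
    then show ?thesis by (subst \<open>_ = _\<close>) (rule p, use assms in auto)
  qed
  have G: "phi (1/2*x*y) = 1/2 * (x * phi y + y * phi x) - (x*y)/2" if "0 \<le> x" "0 \<le> y" for x y
  proof -
    have "phi (1/2*x*y) = phi (1/2*(x*y))" by (simp add: mult.assoc)
    also have "\<dots> = 1/2 * phi (x*y) - (x*y)/2" using that by (intro h) auto
    finally show ?thesis using p that by simp
  qed
  have F3: "phi ((1/2*x*y + 1/2*z*t)/2) = 1/2 * phi (1/2*x*y + 1/2*z*t) - (1/2*x*y + 1/2*z*t)/2"
    if "0 \<le> x" "0 \<le> y" "0 \<le> z" "0 \<le> t" for x y z t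
  proof -
    have "(1/2*x*y + 1/2*z*t)/2 = 1/2 * (1/2*x*y + 1/2*z*t)" by simp
    then show ?thesis using h that by simp
  qed
  show ?thesis
    unfolding gg_def F1 G[OF assms(1,3)] G[OF assms(2,4)] G[OF assms(2,3)] G[OF assms(1,4)]
      F3[OF assms(1,3,2,4)] F3[OF assms(2,3,1,4)]
    by (simp add: field_simps)
qed



lemma has_sum_prod:
  fixes f :: "'a \<Rightarrow> real" and g :: "'b \<Rightarrow> real"
  assumes hf: "(f has_sum a) A" and hg: "(g has_sum b) B"
    and nf: "\<And>x. 0 \<le> f x" and ng: "\<And>y. 0 \<le> g y"
  shows "((\<lambda>(x,y). f x * g y) has_sum (a*b)) (A \<times> B)"
proof -
  have sf: "f summable_on A" and sg: "g summable_on B" using hf hg by (auto simp: summable_on_def)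
  have ia: "infsum f A = a" and ib: "infsum g B = b" using hf hg by (auto intro: infsumI)
  have nrm: "norm (f x * g y) = f x * g y" for x y using nf ng by simp
  have "(\<lambda>p. norm ((\<lambda>(x,y). f x * g y) p)) summable_on Sigma A (\<lambda>_. B)"
    unfolding Infinite_Sum.abs_summable_on_Sigma_iff
  proof (intro conjI ballI)
    fix x assume "x \<in> A"
    show "(\<lambda>y. norm ((\<lambda>(x,y). f x * g y) (x, y))) summable_on B"
      using summable_on_cmult_right[OF sg, of "f x"] nf ng by (simp add: abs_mult)
  next
    have "\<And>x. (\<Sum>\<^sub>\<infinity>y\<in>B. norm ((\<lambda>(x,y). f x * g y) (x, y))) = f x * b"
      using nf ng by (simp add: abs_mult infsum_cmult_right' ib)
    moreover have "(\<lambda>x. norm (f x * b)) summable_on A"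
      using summable_on_cmult_left[OF sf, of b] nf ib hg by (simp add: abs_mult has_sum_nonneg ng)
    ultimately show "(\<lambda>x. norm (\<Sum>\<^sub>\<infinity>y\<in>B. norm ((\<lambda>(x,y). f x * g y) (x, y)))) summable_on A"
      by (simp only:)
  qed
  then have sm: "(\<lambda>(x,y). f x * g y) summable_on (A \<times> B)"
    using summable_on_iff_abs_summable_on_real by blast
  have "infsum (\<lambda>(x,y). f x * g y) (A \<times> B) = infsum (\<lambda>x. infsum (\<lambda>y. f x * g y) B) A"
    using infsum_Sigma_banach[OF sm] by simp
  also have "\<dots> = infsum (\<lambda>x. f x * b) A" by (simp add: infsum_cmult_right' ib)
  also have "\<dots> = a * b" by (simp add: infsum_cmult_left' ia)
  finally show ?thesis using sm by (metis has_sum_infsum)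
qed

lemma summable_nonneg_cmp:
  fixes f g :: "'a \<Rightarrow> real"
  assumes "g summable_on A" "\<And>x. x \<in> A \<Longrightarrow> 0 \<le> f x" "\<And>x. x \<in> A \<Longrightarrow> f x \<le> g x"
  shows "f summable_on A"
proof -
  have "(\<lambda>x. norm (g x)) summable_on A"
    using assms by (metis summable_on_iff_abs_summable_on_real)
  then have "(\<lambda>x. norm (f x)) summable_on A"
    by (rule Infinite_Sum.abs_summable_on_comparison_test) (use assms in force)
  then show ?thesis using summable_on_iff_abs_summable_on_real by blast
qed

lemma has_sum_split3:
  fixes h :: "'a \<times> 'b \<times> bool \<Rightarrow> real"
  assumes "((\<lambda>(y,z). h (y,z,False)) has_sum a) UNIV" "((\<lambda>(y,z). h (y,z,True)) has_sum b) UNIV"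
  shows "(h has_sum (a+b)) UNIV"
proof -
  define e where "e u = (\<lambda>(y::'a,z::'b). (y,z,u))" for u :: bool
  have inj: "inj (e u)" for u by (auto simp: e_def inj_on_def)
  have "(h has_sum a) (range (e False))"
    using assms(1) by (subst has_sum_reindex[OF inj]) (simp add: e_def o_def case_prod_beta')
  moreover have "(h has_sum b) (range (e True))"
    using assms(2) by (subst has_sum_reindex[OF inj]) (simp add: e_def o_def case_prod_beta')
  moreover have "range (e False) \<inter> range (e True) = {}" by (auto simp: e_def)
  moreover have "range (e False) \<union> range (e True) = UNIV"
  proof -
    have "x \<in> range (e (snd (snd x)))" for x
      by (cases x) (auto simp: e_def image_iff)
    then show ?thesis by (metis (full_types) UNIV_eq_I UnI1 UnI2)
  qed
  ultimately show ?thesis using has_sum_Un_disjoint by metis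
qed



definition qc :: "'y chan \<Rightarrow> 'y \<Rightarrow> real" where "qc W y = (W False y + W True y)/2"
definition Gc :: "'y chan \<Rightarrow> 'y \<Rightarrow> real" where "Gc W y = gg (W False y) (W True y)"

lemma chan_nonneg: "is_channel W \<Longrightarrow> 0 \<le> W x y" by (simp add: is_channel_def)

lemma sym_cap_G: assumes "\<And>x y. 0 \<le> W x y" shows "sym_cap W = infsum (Gc W) UNIV"
proof -
  have "\<And>y. (\<Sum>x\<in>UNIV. (if W x y = 0 then 0
      else 1/2 * W x y * log 2 (W x y / ((W False y + W True y) / 2)))) = Gc W y"
    using assms by (simp add: UNIV_bool gg_kk kk_def Gc_def)
  then show ?thesis by (simp add: sym_cap_def)
qed

lemma q_has_sum: assumes "is_channel W" shows "(qc W has_sum 1) UNIV"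
proof -
  have "((\<lambda>y. W False y + W True y) has_sum (1+1)) UNIV"
    using assms by (intro has_sum_add) (auto simp: is_channel_def)
  from has_sum_cmult_right[OF this, of "1/2"] show ?thesis
    by (simp add: qc_def[abs_def])
qed

lemma G_nonneg: "is_channel W \<Longrightarrow> 0 \<le> Gc W y"
  by (simp add: Gc_def gg_nonneg chan_nonneg)

lemma G_le_q: "is_channel W \<Longrightarrow> Gc W y \<le> qc W y"
  using gg_le[of "W False y" "W True y"] by (simp add: Gc_def qc_def chan_nonneg)

lemma G_summable: assumes "is_channel W" shows "Gc W summable_on UNIV"
proof (rule summable_nonneg_cmp[of "qc W"])
  show "qc W summable_on UNIV" using q_has_sum[OF assms] by (auto simp: summable_on_def)
  show "\<And>x. x \<in> UNIV \<Longrightarrow> 0 \<le> Gc W x" using G_nonneg[OF assms] by blast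
  show "\<And>x. x \<in> UNIV \<Longrightarrow> Gc W x \<le> qc W x" using G_le_q[OF assms] by blast
qed

lemma G_has_sum: assumes "is_channel W" shows "(Gc W has_sum sym_cap W) UNIV"
proof -
  have "sym_cap W = infsum (Gc W) UNIV" using sym_cap_G chan_nonneg[OF assms] by blast
  then show ?thesis using has_sum_infsum[OF G_summable[OF assms]] by simp
qed

lemma map_channel: assumes "inj f" "is_channel W" shows "is_channel (chan_map f W)"
  unfolding is_channel_def
proof (intro conjI allI)
  fix x z show "0 \<le> chan_map f W x z" using assms by (simp add: chan_map_def chan_nonneg)
next
  fix x
  have "(W x has_sum 1) UNIV" using assms by (simp add: is_channel_def)
  then have "((chan_map f W x \<circ> f) has_sum 1) UNIV"
    using assms(1) by (simp add: o_def chan_map_def)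
  then have "(chan_map f W x has_sum 1) (range f)" using assms(1) by (simp add: has_sum_reindex)
  then show "(chan_map f W x has_sum 1) UNIV"
    by (subst has_sum_cong_neutral[where T="range f"]) (auto simp: chan_map_def)
qed

lemma map_cap: assumes "inj f" "is_channel W" shows "sym_cap (chan_map f W) = sym_cap W"
proof -
  have c: "is_channel (chan_map f W)" using map_channel assms by blast
  have s1: "sym_cap (chan_map f W) = infsum (Gc (chan_map f W)) UNIV"
    using sym_cap_G chan_nonneg[OF c] by blast
  have g00: "gg 0 0 = 0" by (simp add: gg_def phi_def)
  have "infsum (Gc (chan_map f W)) UNIV = infsum (Gc (chan_map f W)) (range f)"
    by (rule infsum_cong_neutral) (auto simp: Gc_def chan_map_def g00)
  also have "\<dots> = infsum (Gc (chan_map f W) \<circ> f) UNIV"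
    using assms(1) by (simp add: infsum_reindex)
  also have "\<dots> = infsum (Gc W) UNIV"
    using assms(1) by (simp add: o_def Gc_def[abs_def] chan_map_def)
  also have "\<dots> = sym_cap W" using sym_cap_G chan_nonneg[OF assms(2)] by metis
  finally show ?thesis using s1 by simp
qed

lemma prod_half: assumes "is_channel W" "is_channel V"
  shows "((\<lambda>(y,z). 1/2 * W a y * V b z) has_sum 1/2) UNIV"
proof -
  have "((\<lambda>y. 1/2 * W a y) has_sum (1/2 * 1)) UNIV"
    using assms by (intro has_sum_cmult_right) (simp add: is_channel_def)
  moreover have "(V b has_sum 1) UNIV" using assms by (simp add: is_channel_def)
  ultimately have "((\<lambda>(y,z). (1/2 * W a y) * V b z) has_sum (1/2*1*1)) (UNIV \<times> UNIV)"
    by (rule has_sum_prod) (use assms chan_nonneg in auto)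
  then show ?thesis by (simp add: mult.assoc)
qed

lemma qq_has_sum: assumes "is_channel W" "is_channel V"
  shows "((\<lambda>(y,z). qc W y * qc V z) has_sum 1) UNIV"
  using has_sum_prod[OF q_has_sum[OF assms(1)] q_has_sum[OF assms(2)]] assms
  by (simp add: qc_def chan_nonneg)

lemma minus_channel: assumes "is_channel W" "is_channel V" shows "is_channel (chan_minus W V)"
  unfolding is_channel_def
proof (intro conjI allI)
  fix x p show "0 \<le> chan_minus W V x p" using chan_nonneg[OF assms(1)] chan_nonneg[OF assms(2)]
    by (cases p) (simp add: chan_minus_def UNIV_bool)
next
  fix x
  have h: "((\<lambda>p. (\<lambda>(y,z). 1/2 * W (False\<noteq>x) y * V False z) p + (\<lambda>(y,z). 1/2 * W (True\<noteq>x) y * V True z) p) has_sum (1/2+1/2)) UNIV"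
    by (intro has_sum_add prod_half assms)
  have eq: "chan_minus W V x = (\<lambda>p. (\<lambda>(y,z). 1/2 * W (False\<noteq>x) y * V False z) p + (\<lambda>(y,z). 1/2 * W (True\<noteq>x) y * V True z) p)"
    by (rule ext, case_tac p) (simp add: chan_minus_def UNIV_bool)
  show "(chan_minus W V x has_sum 1) UNIV" using h unfolding eq by simp
qed

lemma plus_channel: assumes "is_channel W" "is_channel V" shows "is_channel (chan_plus W V)"
  unfolding is_channel_def
proof (intro conjI allI)
  fix x p show "0 \<le> chan_plus W V x p" using assms
    by (cases p) (simp add: chan_plus_def chan_nonneg)
next
  fix x
  have "(chan_plus W V x has_sum (1/2+1/2)) UNIV"
  proof (rule has_sum_split3)
    show "((\<lambda>(y,z). chan_plus W V x (y,z,False)) has_sum 1/2) UNIV"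
      using prod_half[OF assms, of "False\<noteq>x" x] by (simp add: chan_plus_def)
    show "((\<lambda>(y,z). chan_plus W V x (y,z,True)) has_sum 1/2) UNIV"
      using prod_half[OF assms, of "True\<noteq>x" x] by (simp add: chan_plus_def)
  qed
  then show "(chan_plus W V x has_sum 1) UNIV" by simp
qed



lemma Gm: "Gc (chan_minus W V) (y,z) = gg (1/2*W False y*V False z + 1/2*W True y*V True z) (1/2*W True y*V False z + 1/2*W False y*V True z)"
  by (simp add: Gc_def chan_minus_def UNIV_bool)

lemma GpF: "Gc (chan_plus W V) (y,z,False) = gg (1/2*W False y*V False z) (1/2*W True y*V True z)"
  by (simp add: Gc_def chan_plus_def)

lemma GpT: "Gc (chan_plus W V) (y,z,True) = gg (1/2*W True y*V False z) (1/2*W False y*V True z)"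
  by (simp add: Gc_def chan_plus_def)

lemma GW_prod: assumes "is_channel W" "is_channel V"
  shows "((\<lambda>(y,z). Gc W y * qc V z) has_sum sym_cap W) UNIV"
proof -
  have "((\<lambda>(y,z). Gc W y * qc V z) has_sum (sym_cap W * 1)) (UNIV \<times> UNIV)"
    by (rule has_sum_prod[OF G_has_sum[OF assms(1)] q_has_sum[OF assms(2)]])
       (use G_nonneg[OF assms(1)] chan_nonneg[OF assms(2)] in \<open>auto simp: qc_def\<close>)
  then show ?thesis by simp
qed

lemma GV_prod: assumes "is_channel W" "is_channel V"
  shows "((\<lambda>(y,z). qc W y * Gc V z) has_sum sym_cap V) UNIV"
proof -
  have "((\<lambda>(y,z). qc W y * Gc V z) has_sum (1 * sym_cap V)) (UNIV \<times> UNIV)"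
    by (rule has_sum_prod[OF q_has_sum[OF assms(1)] G_has_sum[OF assms(2)]])
       (use G_nonneg[OF assms(2)] chan_nonneg[OF assms(1)] in \<open>auto simp: qc_def\<close>)
  then show ?thesis by simp
qed

lemma minus_le_W: assumes "is_channel W" "is_channel V"
  shows "sym_cap (chan_minus W V) \<le> sym_cap W"
proof (rule has_sum_mono[OF G_has_sum[OF minus_channel[OF assms]] GW_prod[OF assms]])
  fix p :: "'a \<times> 'b"
  obtain y z where p: "p = (y,z)" by (cases p)
  show "Gc (chan_minus W V) p \<le> (\<lambda>(y,z). Gc W y * qc V z) p"
    unfolding p Gm using gg_minus_le[of "W False y" "W True y" "V False z" "V True z"]
      chan_nonneg[OF assms(1)] chan_nonneg[OF assms(2)] by (simp add: Gc_def qc_def)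
qed

lemma minus_le_V: assumes "is_channel W" "is_channel V"
  shows "sym_cap (chan_minus W V) \<le> sym_cap V"
proof (rule has_sum_mono[OF G_has_sum[OF minus_channel[OF assms]] GV_prod[OF assms]])
  fix p :: "'a \<times> 'b"
  obtain y z where p: "p = (y,z)" by (cases p)
  have le: "gg (1/2*V False z*W False y + 1/2*V True z*W True y) (1/2*V True z*W False y + 1/2*V False z*W True y)
     \<le> gg (V False z) (V True z) * ((W False y + W True y)/2)"
    using gg_minus_le[of "V False z" "V True z" "W False y" "W True y"]
      chan_nonneg[OF assms(1)] chan_nonneg[OF assms(2)] by simp
  have eq: "gg (1/2*W False y*V False z + 1/2*W True y*V True z) (1/2*W True y*V False z + 1/2*W False y*V True z)
     = gg (1/2*V False z*W False y + 1/2*V True z*W True y) (1/2*V True z*W False y + 1/2*V False z*W True y)"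
    by (simp add: algebra_simps)
  show "Gc (chan_minus W V) p \<le> (\<lambda>(y,z). qc W y * Gc V z) p"
    unfolding p Gm eq using le by (simp add: Gc_def qc_def mult.commute)
qed

lemma plus_slice_summable:
  assumes "is_channel W" "is_channel V"
  shows "(\<lambda>(y,z). Gc (chan_plus W V) (y,z,u)) summable_on UNIV"
proof (rule summable_nonneg_cmp[of "\<lambda>(y,z). qc W y * qc V z"])
  show "(\<lambda>(y,z). qc W y * qc V z) summable_on UNIV"
    using qq_has_sum[OF assms] by (auto simp: summable_on_def)
  fix p :: "'a \<times> 'b"
  obtain y z where p: "p = (y,z)" by (cases p)
  have n: "0 \<le> W False y" "0 \<le> W True y" "0 \<le> V False z" "0 \<le> V True z"
    using chan_nonneg[OF assms(1)] chan_nonneg[OF assms(2)] by auto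
  have c: "is_channel (chan_plus W V)" using plus_channel[OF assms] .
  show "0 \<le> (\<lambda>(y,z). Gc (chan_plus W V) (y,z,u)) p" using G_nonneg[OF c] by (simp add: p)
  have m: "0 \<le> W False y * V True z" "0 \<le> W True y * V False z"
          "0 \<le> W False y * V False z" "0 \<le> W True y * V True z" using n by auto
  have "(\<lambda>(y,z). Gc (chan_plus W V) (y,z,u)) p \<le> qc (chan_plus W V) (y,z,u)"
    using G_le_q[OF c] by (simp add: p)
  also have "\<dots> \<le> qc W y * qc V z"
    using m by (cases u) (simp_all add: qc_def chan_plus_def field_simps)
  finally show "(\<lambda>(y,z). Gc (chan_plus W V) (y,z,u)) p \<le> (\<lambda>(y,z). qc W y * qc V z) p"
    by (simp add: p)
qed

lemma chain: assumes "is_channel W" "is_channel V"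
  shows "sym_cap (chan_minus W V) + sym_cap (chan_plus W V) = sym_cap W + sym_cap V"
proof -
  define sF where "sF = (\<lambda>(y,z). Gc (chan_plus W V) (y,z,False))"
  define sT where "sT = (\<lambda>(y,z). Gc (chan_plus W V) (y,z,True))"
  have hF: "(sF has_sum infsum sF UNIV) UNIV"
    using plus_slice_summable[OF assms] by (simp add: sF_def)
  have hT: "(sT has_sum infsum sT UNIV) UNIV"
    using plus_slice_summable[OF assms] by (simp add: sT_def)
  have "(Gc (chan_plus W V) has_sum (infsum sF UNIV + infsum sT UNIV)) UNIV"
    by (rule has_sum_split3) (use hF hT in \<open>simp_all add: sF_def sT_def\<close>)
  then have P: "sym_cap (chan_plus W V) = infsum sF UNIV + infsum sT UNIV"
    using G_has_sum[OF plus_channel[OF assms]] has_sum_unique by blast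
  have tot: "((\<lambda>p. Gc (chan_minus W V) p + (sF p + sT p)) has_sum
      (sym_cap (chan_minus W V) + (infsum sF UNIV + infsum sT UNIV))) UNIV"
    by (intro has_sum_add G_has_sum minus_channel assms hF hT)
  have tot2: "((\<lambda>p. (\<lambda>(y,z). Gc W y * qc V z) p + (\<lambda>(y,z). qc W y * Gc V z) p) has_sum
      (sym_cap W + sym_cap V)) UNIV"
    by (intro has_sum_add GW_prod GV_prod assms)
  have pt: "Gc (chan_minus W V) p + (sF p + sT p) = (\<lambda>(y,z). Gc W y * qc V z) p + (\<lambda>(y,z). qc W y * Gc V z) p" for p
  proof -
    obtain y z where p: "p = (y,z)" by (cases p)
    have ch: "gg (1/2*W False y*V False z + 1/2*W True y*V True z) (1/2*W True y*V False z + 1/2*W False y*V True z)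
       + (gg (1/2*W False y*V False z) (1/2*W True y*V True z) + gg (1/2*W True y*V False z) (1/2*W False y*V True z))
       = gg (W False y) (W True y) * ((V False z + V True z)/2) + gg (V False z) (V True z) * ((W False y + W True y)/2)"
      by (rule gg_chain) (use chan_nonneg[OF assms(1)] chan_nonneg[OF assms(2)] in auto)
    show ?thesis unfolding p sF_def sT_def prod.case Gm GpF GpT using ch
      unfolding Gc_def qc_def by (simp add: mult.commute[of "(W False y + W True y)/2"])
  qed
  have "sym_cap (chan_minus W V) + (infsum sF UNIV + infsum sT UNIV) = sym_cap W + sym_cap V"
    using tot tot2 pt has_sum_unique by (metis (no_types, lifting) ext)
  then show ?thesis using P by simp
qed



lemma LR_Suc:
  "Lch W (Suc n) = chan_map (\<lambda>(a, b). Pair2 a b) (chan_minus (Lch W n) (Rch W n))"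
  "Rch W (Suc n) = chan_map (\<lambda>(a, b, u). Pair3 a b u) (chan_plus (Lch W n) (Rch W n))"
  by (cases "LR W n"; simp add: Lch_def Rch_def)+

lemma inj2: "inj (\<lambda>(a, b). Pair2 a b)" by (auto simp: inj_on_def)
lemma inj3: "inj (\<lambda>(a, b, u). Pair3 a b u)" by (auto simp: inj_on_def)
lemma inj1: "inj Base" by (auto simp: inj_on_def)

lemma LR_inv: assumes "is_channel W"
  shows "is_channel (Lch W n) \<and> is_channel (Rch W n)
    \<and> sym_cap (Lch W n) + sym_cap (Rch W n) = 2 * sym_cap W
    \<and> sym_cap (Lch W n) \<le> sym_cap (Rch W n)"
proof (induction n)
  case 0
  have "Lch W 0 = chan_map Base W" "Rch W 0 = chan_map Base W" by (simp_all add: Lch_def Rch_def)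
  then show ?case using map_channel[OF inj1 assms] map_cap[OF inj1 assms] by simp
next
  case (Suc n)
  then have cL: "is_channel (Lch W n)" and cR: "is_channel (Rch W n)" by auto
  have c1: "is_channel (Lch W (Suc n))" "is_channel (Rch W (Suc n))"
    unfolding LR_Suc by (intro map_channel inj2 inj3 minus_channel plus_channel cL cR)+
  have e1: "sym_cap (Lch W (Suc n)) = sym_cap (chan_minus (Lch W n) (Rch W n))"
    unfolding LR_Suc by (intro map_cap inj2 minus_channel cL cR)
  have e2: "sym_cap (Rch W (Suc n)) = sym_cap (chan_plus (Lch W n) (Rch W n))"
    unfolding LR_Suc by (intro map_cap inj3 plus_channel cL cR)
  have ch: "sym_cap (chan_minus (Lch W n) (Rch W n)) + sym_cap (chan_plus (Lch W n) (Rch W n))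
      = sym_cap (Lch W n) + sym_cap (Rch W n)" by (rule chain[OF cL cR])
  have l: "sym_cap (chan_minus (Lch W n) (Rch W n)) \<le> sym_cap (Lch W n)" by (rule minus_le_W[OF cL cR])
  have l2: "sym_cap (chan_minus (Lch W n) (Rch W n)) \<le> sym_cap (Rch W n)" by (rule minus_le_V[OF cL cR])
  show ?case using c1 e1 e2 ch l l2 Suc by auto
qed

theorem mainTheorem2:
  fixes W :: "'y chan" and n :: nat
  assumes "is_channel W"
  shows "sym_cap (Lch W n) + sym_cap (Rch W n) = 2 * sym_cap W
       \<and> sym_cap (Lch W (Suc n)) \<le> sym_cap (Lch W n)
       \<and> sym_cap (Lch W n) \<le> sym_cap (Rch W n)
       \<and> sym_cap (Rch W n) \<le> sym_cap (Rch W (Suc n))"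
proof -
  have I: "is_channel (Lch W n)" "is_channel (Rch W n)"
    "sym_cap (Lch W n) + sym_cap (Rch W n) = 2 * sym_cap W"
    "sym_cap (Lch W n) \<le> sym_cap (Rch W n)" using LR_inv[OF assms, of n] by auto
  have I2: "sym_cap (Lch W (Suc n)) + sym_cap (Rch W (Suc n)) = 2 * sym_cap W"
    using LR_inv[OF assms, of "Suc n"] by auto
  have e1: "sym_cap (Lch W (Suc n)) = sym_cap (chan_minus (Lch W n) (Rch W n))"
    unfolding LR_Suc by (intro map_cap inj2 minus_channel I(1,2))
  have l: "sym_cap (Lch W (Suc n)) \<le> sym_cap (Lch W n)"
    unfolding e1 by (rule minus_le_W[OF I(1,2)])
  show ?thesis using I I2 l by linarith
qed


end
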